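(* Let $\mathbb{X}$ be a reverse differential restriction category. For any parallel maps $f,g:A\to B$, if $f\le g$ then $R[f]\le R[g]$. Moreover, if $\mathbb{X}$ is a join restriction category, then for every pairwise compatible family $\{f_i\}$ of maps $A\to B$ we have $R[\bigvee_i f_i]=\bigvee_i R[f_i]$.
   Context: Composition is written in diagrammatic order: $fg$ means "first $f$, then $g$". A restriction category is a category with an operation sending each $f:A\to B$ to a map $\bar f:A\to A$ such that $\bar f f=f$, $\bar f\bar g=\bar g\bar f$ (for $f,g$ with common domain), $\overline{\bar f g}=\bar f\bar g$, and $f\bar g=\overline{fg}\,f$. A map $f$ is total if $\bar f=1$. For parallel maps: - $f\le g$ means $\bar f g=f$; - $f,g$ are compatible if $\bar f g=\bar g f$; - the join $\bigvee_i f_i$ of a family is its least upper bound for $\le$. A join restriction category is a restriction category in which every family of pairwise compatible parallel maps (including the empty family) has a join, and composition preserves joins on both sides: $h(\bigvee_i f_i)=\bigvee_i hf_i$ and $(\bigvee_i f_i)k=\bigvee_i f_ik$. The category has restriction products if: - there is an object $1$ with a total map $!_A:A\to 1$ for each $A$ such that every $f:A\to 1$ equals $\bar f\,!_A$; - for all $A,B$ there is an object $A\times B$ with total maps $\pi_0,\pi_1$ such that for all $f:C\to A$, $g:C\to B$ there is a unique $\langle f,g\rangle:C\to A\times B$ with $\langle f,g\rangle\pi_0=\bar g f$ and $\langle f,g\rangle\pi_1=\bar f g$. Write $f\times g=\langle \pi_0 f,\pi_1 g\rangle$. A Cartesian left additive restriction category is a restriction category with restriction products in which every hom-set is a commutative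 monoid $(+,0)$ such that: - $\overline{f+g}=\bar f\bar g$ and $\bar 0=1$; - $x(f+g)=xf+xg$ and $x0=\bar x 0$; - $(f+g)\pi_i=f\pi_i+g\pi_i$ and $0\pi_i=0$. Write $\iota_0=\langle 1,0\rangle:A\to A\times B$ and $\iota_1=\langle 0,1\rangle:B\to A\times B$. A reverse differential restriction category (RDRC) is a Cartesian left additive restriction category with an operation sending each $f:A\to B$ to $R[f]:A\times B\to A$ such that: - [RD.1] $R[f+g]=R[f]+R[g]$ and $R[0]=0$. - [RD.2] $\langle a,b+c\rangle R[f]=\langle a,b\rangle R[f]+\langle a,c\rangle R[f]$ and $\langle a,0\rangle R[f]=\overline{af}\,0$. - [RD.3] $R[\pi_j]=\pi_1\iota_j$. - [RD.4] $R[\langle f,g\rangle]=(1\times\pi_0)R[f]+(1\times\pi_1)R[g]$. - [RD.5] $R[fg]=\langle \pi_0,\langle\pi_0 f,\pi_1\rangle R[g]\rangle R[f]$. - [RD.6] $\langle 1\times\pi_0,\,0\times\pi_1\rangle(\iota_0\times 1)R[R[R[f]]]\pi_1=(1\times\pi_1)R[f]$. - [RD.7] With $g:=(\iota_0\times 1)R[R[f]]\pi_1$, one has $(\iota_0\times1)R[R[g]]\pi_1=\mathrm{ex}\,(\iota_0\times 1)R[R[g]]\pi_1$, where $\mathrm{ex}=\langle\pi_0\times\pi_0,\pi_1\times\pi_1\rangle$. - [RD.8] $\overline{R[f]}=\bar f\times 1$. - [RD.9] $R[\bar f]=(\bar f\times 1)\pi_1$. *)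

theory Defs
  imports Main
begin

text \<open>A (large) category presented by a set of objects and a set of arrows over
  carrier types 'o and 'a, with composition written in diagrammatic order:
  Comp f g means "first f, then g".\<close>

record ('o, 'a) rdrc_data =
  Obj  :: "'o set"
  Arr  :: "'a set"
  Dom  :: "'a \<Rightarrow> 'o"
  Cod  :: "'a \<Rightarrow> 'o"
  Id   :: "'o \<Rightarrow> 'a"
  Comp :: "'a \<Rightarrow> 'a \<Rightarrow> 'a"
  Rst  :: "'a \<Rightarrow> 'a"
  Term :: "'o"
  Bang :: "'o \<Rightarrow> 'a"
  Prod :: "'o \<Rightarrow> 'o \<Rightarrow> 'o"
  Pi0  :: "'o \<Rightarrow> 'o \<Rightarrow> 'a"
  Pi1  :: "'o \<Rightarrow> 'o \<Rightarrow> 'a"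
  Pair :: "'a \<Rightarrow> 'a \<Rightarrow> 'a"
  Add  :: "'a \<Rightarrow> 'a \<Rightarrow> 'a"
  Zero :: "'o \<Rightarrow> 'o \<Rightarrow> 'a"
  Rev  :: "'a \<Rightarrow> 'a"

definition hom :: "('o, 'a, 'x) rdrc_data_scheme \<Rightarrow> 'o \<Rightarrow> 'o \<Rightarrow> 'a set" where
  "hom S A B = {f \<in> Arr S. Dom S f = A \<and> Cod S f = B}"

definition category :: "('o, 'a, 'x) rdrc_data_scheme \<Rightarrow> bool" where
  "category S \<longleftrightarrow>
     (\<forall>f \<in> Arr S. Dom S f \<in> Obj S \<and> Cod S f \<in> Obj S) \<and>
     (\<forall>A \<in> Obj S. Id S A \<in> hom S A A) \<and>
     (\<forall>A B D f g. f \<in> hom S A B \<longrightarrow> g \<in> hom S B D \<longrightarrow> Comp S f g \<in> hom S A D) \<and>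
     (\<forall>f \<in> Arr S. Comp S (Id S (Dom S f)) f = f \<and> Comp S f (Id S (Cod S f)) = f) \<and>
     (\<forall>A B D E f g h. f \<in> hom S A B \<longrightarrow> g \<in> hom S B D \<longrightarrow> h \<in> hom S D E \<longrightarrow>
        Comp S (Comp S f g) h = Comp S f (Comp S g h))"

definition restriction_category :: "('o, 'a, 'x) rdrc_data_scheme \<Rightarrow> bool" where
  "restriction_category S \<longleftrightarrow> category S \<and>
     (\<forall>A B f. f \<in> hom S A B \<longrightarrow> Rst S f \<in> hom S A A) \<and>
     (\<forall>f \<in> Arr S. Comp S (Rst S f) f = f) \<and>
     (\<forall>f \<in> Arr S. \<forall>g \<in> Arr S. Dom S f = Dom S g \<longrightarrow>
        Comp S (Rst S f) (Rst S g) = Comp S (Rst S g) (Rst S f)) \<and>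
     (\<forall>f \<in> Arr S. \<forall>g \<in> Arr S. Dom S f = Dom S g \<longrightarrow>
        Rst S (Comp S (Rst S f) g) = Comp S (Rst S f) (Rst S g)) \<and>
     (\<forall>A B D f g. f \<in> hom S A B \<longrightarrow> g \<in> hom S B D \<longrightarrow>
        Comp S f (Rst S g) = Comp S (Rst S (Comp S f g)) f)"

definition total :: "('o, 'a, 'x) rdrc_data_scheme \<Rightarrow> 'a \<Rightarrow> bool" where
  "total S f \<longleftrightarrow> Rst S f = Id S (Dom S f)"

definition rleq :: "('o, 'a, 'x) rdrc_data_scheme \<Rightarrow> 'a \<Rightarrow> 'a \<Rightarrow> bool" where
  "rleq S f g \<longleftrightarrow> Comp S (Rst S f) g = f"

definition compatible :: "('o, 'a, 'x) rdrc_data_scheme \<Rightarrow> 'a \<Rightarrow> 'a \<Rightarrow> bool" where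
  "compatible S f g \<longleftrightarrow> Comp S (Rst S f) g = Comp S (Rst S g) f"

definition compatible_family :: "('o, 'a, 'x) rdrc_data_scheme \<Rightarrow> 'a set \<Rightarrow> bool" where
  "compatible_family S F \<longleftrightarrow> (\<forall>f \<in> F. \<forall>g \<in> F. compatible S f g)"

definition is_join :: "('o, 'a, 'x) rdrc_data_scheme \<Rightarrow> 'o \<Rightarrow> 'o \<Rightarrow> 'a set \<Rightarrow> 'a \<Rightarrow> bool" where
  "is_join S A B F j \<longleftrightarrow> j \<in> hom S A B \<and> (\<forall>f \<in> F. rleq S f j) \<and>
     (\<forall>h \<in> hom S A B. (\<forall>f \<in> F. rleq S f h) \<longrightarrow> rleq S j h)"

definition join_restriction_category :: "('o, 'a, 'x) rdrc_data_scheme \<Rightarrow> bool" where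
  "join_restriction_category S \<longleftrightarrow> restriction_category S \<and>
     (\<forall>A \<in> Obj S. \<forall>B \<in> Obj S. \<forall>F. F \<subseteq> hom S A B \<and> compatible_family S F \<longrightarrow>
        (\<exists>j. is_join S A B F j)) \<and>
     (\<forall>A B F j. F \<subseteq> hom S A B \<and> compatible_family S F \<and> is_join S A B F j \<longrightarrow>
        (\<forall>D h. h \<in> hom S D A \<longrightarrow> is_join S D B ((\<lambda>f. Comp S h f) ` F) (Comp S h j)) \<and>
        (\<forall>D k. k \<in> hom S B D \<longrightarrow> is_join S A D ((\<lambda>f. Comp S f k) ` F) (Comp S j k)))"

definition restriction_products :: "('o, 'a, 'x) rdrc_data_scheme \<Rightarrow> bool" where
  "restriction_products S \<longleftrightarrow>
     Term S \<in> Obj S \<and>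
     (\<forall>A \<in> Obj S. Bang S A \<in> hom S A (Term S) \<and> total S (Bang S A) \<and>
        (\<forall>f \<in> hom S A (Term S). f = Comp S (Rst S f) (Bang S A))) \<and>
     (\<forall>A \<in> Obj S. \<forall>B \<in> Obj S. Prod S A B \<in> Obj S \<and>
        Pi0 S A B \<in> hom S (Prod S A B) A \<and> total S (Pi0 S A B) \<and>
        Pi1 S A B \<in> hom S (Prod S A B) B \<and> total S (Pi1 S A B) \<and>
        (\<forall>X f g. f \<in> hom S X A \<longrightarrow> g \<in> hom S X B \<longrightarrow>
           Pair S f g \<in> hom S X (Prod S A B) \<and>
           Comp S (Pair S f g) (Pi0 S A B) = Comp S (Rst S g) f \<and>
           Comp S (Pair S f g) (Pi1 S A B) = Comp S (Rst S f) g \<and>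
           (\<forall>h \<in> hom S X (Prod S A B).
              Comp S h (Pi0 S A B) = Comp S (Rst S g) f \<and>
              Comp S h (Pi1 S A B) = Comp S (Rst S f) g \<longrightarrow> h = Pair S f g)))"

definition prodmap :: "('o, 'a, 'x) rdrc_data_scheme \<Rightarrow> 'a \<Rightarrow> 'a \<Rightarrow> 'a" where
  "prodmap S f g = Pair S (Comp S (Pi0 S (Dom S f) (Dom S g)) f) (Comp S (Pi1 S (Dom S f) (Dom S g)) g)"

definition iota0 :: "('o, 'a, 'x) rdrc_data_scheme \<Rightarrow> 'o \<Rightarrow> 'o \<Rightarrow> 'a" where
  "iota0 S A B = Pair S (Id S A) (Zero S A B)"

definition iota1 :: "('o, 'a, 'x) rdrc_data_scheme \<Rightarrow> 'o \<Rightarrow> 'o \<Rightarrow> 'a" where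
  "iota1 S A B = Pair S (Zero S B A) (Id S B)"

definition cartesian_left_additive_restriction_category ::
  "('o, 'a, 'x) rdrc_data_scheme \<Rightarrow> bool" where
  "cartesian_left_additive_restriction_category S \<longleftrightarrow>
     restriction_category S \<and> restriction_products S \<and>
     (\<forall>A \<in> Obj S. \<forall>B \<in> Obj S.
        Zero S A B \<in> hom S A B \<and> Rst S (Zero S A B) = Id S A \<and>
        (\<forall>f \<in> hom S A B. \<forall>g \<in> hom S A B. Add S f g \<in> hom S A B \<and>
           Add S f g = Add S g f \<and> Rst S (Add S f g) = Comp S (Rst S f) (Rst S g)) \<and>
        (\<forall>f \<in> hom S A B. \<forall>g \<in> hom S A B. \<forall>h \<in> hom S A B.
           Add S (Add S f g) h = Add S f (Add S g h)) \<and>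
        (\<forall>f \<in> hom S A B. Add S f (Zero S A B) = f) \<and>
        (\<forall>D \<in> Obj S. \<forall>x \<in> hom S D A.
           (\<forall>f \<in> hom S A B. \<forall>g \<in> hom S A B. Comp S x (Add S f g) = Add S (Comp S x f) (Comp S x g)) \<and>
           Comp S x (Zero S A B) = Comp S (Rst S x) (Zero S D B)) \<and>
        (\<forall>D \<in> Obj S. \<forall>f \<in> hom S D (Prod S A B). \<forall>g \<in> hom S D (Prod S A B).
           Comp S (Add S f g) (Pi0 S A B) = Add S (Comp S f (Pi0 S A B)) (Comp S g (Pi0 S A B)) \<and>
           Comp S (Add S f g) (Pi1 S A B) = Add S (Comp S f (Pi1 S A B)) (Comp S g (Pi1 S A B))) \<and>
        (\<forall>D \<in> Obj S. Comp S (Zero S D (Prod S A B)) (Pi0 S A B) = Zero S D A \<and>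
                       Comp S (Zero S D (Prod S A B)) (Pi1 S A B) = Zero S D B))"

definition rdrc :: "('o, 'a, 'x) rdrc_data_scheme \<Rightarrow> bool" where
  "rdrc S \<longleftrightarrow> cartesian_left_additive_restriction_category S \<and>
     (\<forall>A \<in> Obj S. \<forall>B \<in> Obj S. \<forall>f \<in> hom S A B.
        Rev S f \<in> hom S (Prod S A B) A \<and>
        \<comment> \<open>RD.1\<close>
        (\<forall>g \<in> hom S A B. Rev S (Add S f g) = Add S (Rev S f) (Rev S g)) \<and>
        Rev S (Zero S A B) = Zero S (Prod S A B) A \<and>
        \<comment> \<open>RD.2\<close>
        (\<forall>X \<in> Obj S. \<forall>a \<in> hom S X A. \<forall>b \<in> hom S X B. \<forall>c \<in> hom S X B.
           Comp S (Pair S a (Add S b c)) (Rev S f) =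
             Add S (Comp S (Pair S a b) (Rev S f)) (Comp S (Pair S a c) (Rev S f))) \<and>
        (\<forall>X \<in> Obj S. \<forall>a \<in> hom S X A.
           Comp S (Pair S a (Zero S X B)) (Rev S f) = Comp S (Rst S (Comp S a f)) (Zero S X A)) \<and>
        \<comment> \<open>RD.5\<close>
        (\<forall>D \<in> Obj S. \<forall>g \<in> hom S B D.
           Rev S (Comp S f g) =
             Comp S (Pair S (Pi0 S A D)
                       (Comp S (Pair S (Comp S (Pi0 S A D) f) (Pi1 S A D)) (Rev S g)))
                    (Rev S f)) \<and>
        \<comment> \<open>RD.6\<close>
        Comp S (Pair S (prodmap S (Id S A) (Pi0 S B B)) (prodmap S (Zero S A A) (Pi1 S B B)))
               (Comp S (prodmap S (iota0 S (Prod S A B) A) (Id S (Prod S A B)))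
                       (Comp S (Rev S (Rev S (Rev S f))) (Pi1 S (Prod S A B) A)))
          = Comp S (prodmap S (Id S A) (Pi1 S B B)) (Rev S f) \<and>
        \<comment> \<open>RD.7\<close>
        (let g = Comp S (prodmap S (iota0 S A B) (Id S A))
                        (Comp S (Rev S (Rev S f)) (Pi1 S A B));
             h = Comp S (prodmap S (iota0 S (Prod S A A) B) (Id S (Prod S A A)))
                        (Comp S (Rev S (Rev S g)) (Pi1 S (Prod S A A) B));
             ex = Pair S (prodmap S (Pi0 S A A) (Pi0 S A A)) (prodmap S (Pi1 S A A) (Pi1 S A A))
         in h = Comp S ex h) \<and>
        \<comment> \<open>RD.8\<close>
        Rst S (Rev S f) = prodmap S (Rst S f) (Id S B) \<and>
        \<comment> \<open>RD.9\<close>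
        Rev S (Rst S f) = Comp S (prodmap S (Rst S f) (Id S A)) (Pi1 S A A)) \<and>
     \<comment> \<open>RD.3\<close>
     (\<forall>A \<in> Obj S. \<forall>B \<in> Obj S.
        Rev S (Pi0 S A B) = Comp S (Pi1 S (Prod S A B) A) (iota0 S A B) \<and>
        Rev S (Pi1 S A B) = Comp S (Pi1 S (Prod S A B) B) (iota1 S A B)) \<and>
     \<comment> \<open>RD.4\<close>
     (\<forall>X \<in> Obj S. \<forall>A \<in> Obj S. \<forall>B \<in> Obj S. \<forall>f \<in> hom S X A. \<forall>g \<in> hom S X B.
        Rev S (Pair S f g) =
          Add S (Comp S (prodmap S (Id S X) (Pi0 S A B)) (Rev S f))
                (Comp S (prodmap S (Id S X) (Pi1 S A B)) (Rev S g)))"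

end

theory Submission
  imports Defs
begin

context
  fixes S :: "('o, 'a, 'x) rdrc_data_scheme"
  assumes rd: "rdrc S"
begin

lemma clar: "cartesian_left_additive_restriction_category S"
  using rd unfolding rdrc_def by (rule conjunct1)

lemma rc: "restriction_category S"
  using clar unfolding cartesian_left_additive_restriction_category_def by (rule conjunct1)

lemma rp: "restriction_products S"
  using clar unfolding cartesian_left_additive_restriction_category_def by (elim conjE)

lemma cat: "category S" using rc unfolding restriction_category_def by (rule conjunct1)

lemma cat_parts:
  "(\<forall>f \<in> Arr S. Dom S f \<in> Obj S \<and> Cod S f \<in> Obj S)"
  "(\<forall>A \<in> Obj S. Id S A \<in> hom S A A)"
  "(\<forall>A B D f g. f \<in> hom S A B \<longrightarrow> g \<in> hom S B D \<longrightarrow> Comp S f g \<in> hom S A D)"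
  "(\<forall>f \<in> Arr S. Comp S (Id S (Dom S f)) f = f \<and> Comp S f (Id S (Cod S f)) = f)"
  "(\<forall>A B D E f g h. f \<in> hom S A B \<longrightarrow> g \<in> hom S B D \<longrightarrow> h \<in> hom S D E \<longrightarrow>
        Comp S (Comp S f g) h = Comp S f (Comp S g h))"
  using cat unfolding category_def by blast+

lemma rc_parts:
  "(\<forall>A B f. f \<in> hom S A B \<longrightarrow> Rst S f \<in> hom S A A)"
  "(\<forall>f \<in> Arr S. Comp S (Rst S f) f = f)"
  "(\<forall>f \<in> Arr S. \<forall>g \<in> Arr S. Dom S f = Dom S g \<longrightarrow>
        Comp S (Rst S f) (Rst S g) = Comp S (Rst S g) (Rst S f))"
  "(\<forall>f \<in> Arr S. \<forall>g \<in> Arr S. Dom S f = Dom S g \<longrightarrow>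
        Rst S (Comp S (Rst S f) g) = Comp S (Rst S f) (Rst S g))"
  "(\<forall>A B D f g. f \<in> hom S A B \<longrightarrow> g \<in> hom S B D \<longrightarrow>
        Comp S f (Rst S g) = Comp S (Rst S (Comp S f g)) f)"
  using rc unfolding restriction_category_def by blast+

lemma comp_hom: "f \<in> hom S A B \<Longrightarrow> g \<in> hom S B D \<Longrightarrow> Comp S f g \<in> hom S A D"
  using cat_parts(3) by blast

lemma assoc: "f \<in> hom S A B \<Longrightarrow> g \<in> hom S B D \<Longrightarrow> h \<in> hom S D E \<Longrightarrow>
   Comp S (Comp S f g) h = Comp S f (Comp S g h)"
  using cat_parts(5) by blast

lemma hom_obj: "f \<in> hom S A B \<Longrightarrow> A \<in> Obj S \<and> B \<in> Obj S"
  using cat_parts(1) unfolding hom_def by blast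

lemma hom_dom: "f \<in> hom S A B \<Longrightarrow> Dom S f = A"
  unfolding hom_def by blast

lemma id_hom: "A \<in> Obj S \<Longrightarrow> Id S A \<in> hom S A A"
  using cat_parts(2) by blast

lemma id_left: "f \<in> hom S A B \<Longrightarrow> Comp S (Id S A) f = f"
  using cat_parts(4) unfolding hom_def by blast

lemma id_right: "f \<in> hom S A B \<Longrightarrow> Comp S f (Id S B) = f"
  using cat_parts(4) unfolding hom_def by blast

lemma rst_hom: "f \<in> hom S A B \<Longrightarrow> Rst S f \<in> hom S A A"
  using rc_parts(1) by blast

lemma rst_comp: "f \<in> hom S A B \<Longrightarrow> Comp S (Rst S f) f = f"
  using rc_parts(2) unfolding hom_def by blast

lemma rst_commute: "f \<in> hom S A B \<Longrightarrow> g \<in> hom S A C \<Longrightarrow>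
   Comp S (Rst S f) (Rst S g) = Comp S (Rst S g) (Rst S f)"
  using rc_parts(3) unfolding hom_def by auto

lemma rst_rst_comp: "f \<in> hom S A B \<Longrightarrow> g \<in> hom S A C \<Longrightarrow>
   Rst S (Comp S (Rst S f) g) = Comp S (Rst S f) (Rst S g)"
  using rc_parts(4) unfolding hom_def by auto

lemma rst_swap: "f \<in> hom S A B \<Longrightarrow> g \<in> hom S B D \<Longrightarrow>
   Comp S f (Rst S g) = Comp S (Rst S (Comp S f g)) f"
  using rc_parts(5) by blast


lemma rst_id: "A \<in> Obj S \<Longrightarrow> Rst S (Id S A) = Id S A"
  by (metis id_hom id_right rst_comp rst_hom)

lemma rst_idem: "f \<in> hom S A B \<Longrightarrow> Rst S (Rst S f) = Rst S f"
proof -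
  assume f: "f \<in> hom S A B"
  have A: "A \<in> Obj S" using hom_obj[OF f] by blast
  have "Rst S (Comp S (Rst S f) (Id S A)) = Comp S (Rst S f) (Rst S (Id S A))"
    using rst_rst_comp[OF f id_hom[OF A]] .
  then show ?thesis using rst_id[OF A] id_right[OF rst_hom[OF f]] by simp
qed

lemma rst_dup: "f \<in> hom S A B \<Longrightarrow> Comp S (Rst S f) (Rst S f) = Rst S f"
  by (metis rst_comp rst_hom rst_idem)

lemma rst_comp_rst: assumes f: "f \<in> hom S A B" and g: "g \<in> hom S B D"
  shows "Rst S (Comp S f (Rst S g)) = Rst S (Comp S f g)"
proof -
  have fg: "Comp S f g \<in> hom S A D" using comp_hom[OF f g] .
  have "Rst S (Comp S f (Rst S g)) = Rst S (Comp S (Rst S (Comp S f g)) f)"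
    using rst_swap[OF f g] by simp
  also have "\<dots> = Comp S (Rst S (Comp S f g)) (Rst S f)" using rst_rst_comp[OF fg f] .
  also have "\<dots> = Comp S (Rst S f) (Rst S (Comp S f g))" using rst_commute[OF fg f] .
  also have "\<dots> = Rst S (Comp S (Rst S f) (Comp S f g))" using rst_rst_comp[OF f fg] by simp
  also have "\<dots> = Rst S (Comp S f g)"
    using assoc[OF rst_hom[OF f] f g] rst_comp[OF f] by simp
  finally show ?thesis .
qed

lemma prod_facts:
  assumes "A \<in> Obj S" "B \<in> Obj S"
  shows "Prod S A B \<in> Obj S \<and>
        Pi0 S A B \<in> hom S (Prod S A B) A \<and> total S (Pi0 S A B) \<and>
        Pi1 S A B \<in> hom S (Prod S A B) B \<and> total S (Pi1 S A B) \<and>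
        (\<forall>X f g. f \<in> hom S X A \<longrightarrow> g \<in> hom S X B \<longrightarrow>
           Pair S f g \<in> hom S X (Prod S A B) \<and>
           Comp S (Pair S f g) (Pi0 S A B) = Comp S (Rst S g) f \<and>
           Comp S (Pair S f g) (Pi1 S A B) = Comp S (Rst S f) g \<and>
           (\<forall>h \<in> hom S X (Prod S A B).
              Comp S h (Pi0 S A B) = Comp S (Rst S g) f \<and>
              Comp S h (Pi1 S A B) = Comp S (Rst S f) g \<longrightarrow> h = Pair S f g))"
  using rp assms unfolding restriction_products_def by blast

lemma prod_obj: "A \<in> Obj S \<Longrightarrow> B \<in> Obj S \<Longrightarrow> Prod S A B \<in> Obj S"
  using prod_facts by blast
lemma pi0_hom: "A \<in> Obj S \<Longrightarrow> B \<in> Obj S \<Longrightarrow> Pi0 S A B \<in> hom S (Prod S A B) A"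
  using prod_facts by blast
lemma pi1_hom: "A \<in> Obj S \<Longrightarrow> B \<in> Obj S \<Longrightarrow> Pi1 S A B \<in> hom S (Prod S A B) B"
  using prod_facts by blast
lemma pi0_rst: "A \<in> Obj S \<Longrightarrow> B \<in> Obj S \<Longrightarrow> Rst S (Pi0 S A B) = Id S (Prod S A B)"
  using prod_facts[of A B] hom_dom[OF pi0_hom] unfolding total_def by metis
lemma pi1_rst: "A \<in> Obj S \<Longrightarrow> B \<in> Obj S \<Longrightarrow> Rst S (Pi1 S A B) = Id S (Prod S A B)"
  using prod_facts[of A B] hom_dom[OF pi1_hom] unfolding total_def by metis

lemma pair_hom: "f \<in> hom S X A \<Longrightarrow> g \<in> hom S X B \<Longrightarrow> Pair S f g \<in> hom S X (Prod S A B)"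
  using prod_facts hom_obj by blast
lemma pair_pi0: "f \<in> hom S X A \<Longrightarrow> g \<in> hom S X B \<Longrightarrow>
   Comp S (Pair S f g) (Pi0 S A B) = Comp S (Rst S g) f"
  using prod_facts hom_obj by blast
lemma pair_pi1: "f \<in> hom S X A \<Longrightarrow> g \<in> hom S X B \<Longrightarrow>
   Comp S (Pair S f g) (Pi1 S A B) = Comp S (Rst S f) g"
  using prod_facts hom_obj by blast
lemma pair_uniq: "f \<in> hom S X A \<Longrightarrow> g \<in> hom S X B \<Longrightarrow> h \<in> hom S X (Prod S A B) \<Longrightarrow>
   Comp S h (Pi0 S A B) = Comp S (Rst S g) f \<Longrightarrow>
   Comp S h (Pi1 S A B) = Comp S (Rst S f) g \<Longrightarrow> h = Pair S f g"
proof -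
  assume f: "f \<in> hom S X A" and g: "g \<in> hom S X B"
  have "A \<in> Obj S" "B \<in> Obj S" using hom_obj[OF f] hom_obj[OF g] by auto
  from prod_facts[OF this] f g
  show "h \<in> hom S X (Prod S A B) \<Longrightarrow>
   Comp S h (Pi0 S A B) = Comp S (Rst S g) f \<Longrightarrow>
   Comp S h (Pi1 S A B) = Comp S (Rst S f) g \<Longrightarrow> h = Pair S f g" by blast
qed


lemma rev_all: "\<forall>A \<in> Obj S. \<forall>B \<in> Obj S. \<forall>f \<in> hom S A B.
        Rev S f \<in> hom S (Prod S A B) A \<and>
        (\<forall>g \<in> hom S A B. Rev S (Add S f g) = Add S (Rev S f) (Rev S g)) \<and>
        Rev S (Zero S A B) = Zero S (Prod S A B) A \<and>
        (\<forall>X \<in> Obj S. \<forall>a \<in> hom S X A. \<forall>b \<in> hom S X B. \<forall>c \<in> hom S X B.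
           Comp S (Pair S a (Add S b c)) (Rev S f) =
             Add S (Comp S (Pair S a b) (Rev S f)) (Comp S (Pair S a c) (Rev S f))) \<and>
        (\<forall>X \<in> Obj S. \<forall>a \<in> hom S X A.
           Comp S (Pair S a (Zero S X B)) (Rev S f) = Comp S (Rst S (Comp S a f)) (Zero S X A)) \<and>
        (\<forall>D \<in> Obj S. \<forall>g \<in> hom S B D.
           Rev S (Comp S f g) =
             Comp S (Pair S (Pi0 S A D)
                       (Comp S (Pair S (Comp S (Pi0 S A D) f) (Pi1 S A D)) (Rev S g)))
                    (Rev S f)) \<and>
        Comp S (Pair S (prodmap S (Id S A) (Pi0 S B B)) (prodmap S (Zero S A A) (Pi1 S B B)))
               (Comp S (prodmap S (iota0 S (Prod S A B) A) (Id S (Prod S A B)))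
                       (Comp S (Rev S (Rev S (Rev S f))) (Pi1 S (Prod S A B) A)))
          = Comp S (prodmap S (Id S A) (Pi1 S B B)) (Rev S f) \<and>
        (let g = Comp S (prodmap S (iota0 S A B) (Id S A))
                        (Comp S (Rev S (Rev S f)) (Pi1 S A B));
             h = Comp S (prodmap S (iota0 S (Prod S A A) B) (Id S (Prod S A A)))
                        (Comp S (Rev S (Rev S g)) (Pi1 S (Prod S A A) B));
             ex = Pair S (prodmap S (Pi0 S A A) (Pi0 S A A)) (prodmap S (Pi1 S A A) (Pi1 S A A))
         in h = Comp S ex h) \<and>
        Rst S (Rev S f) = prodmap S (Rst S f) (Id S B) \<and>
        Rev S (Rst S f) = Comp S (prodmap S (Rst S f) (Id S A)) (Pi1 S A A)"
  using rd unfolding rdrc_def by (elim conjE)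

lemma rev_one: assumes f: "f \<in> hom S A B"
  shows "Rev S f \<in> hom S (Prod S A B) A \<and>
        (\<forall>D \<in> Obj S. \<forall>g \<in> hom S B D.
           Rev S (Comp S f g) =
             Comp S (Pair S (Pi0 S A D)
                       (Comp S (Pair S (Comp S (Pi0 S A D) f) (Pi1 S A D)) (Rev S g)))
                    (Rev S f)) \<and>
        Rst S (Rev S f) = prodmap S (Rst S f) (Id S B) \<and>
        Rev S (Rst S f) = Comp S (prodmap S (Rst S f) (Id S A)) (Pi1 S A A)"
proof -
  have "A \<in> Obj S" "B \<in> Obj S" using hom_obj[OF f] by auto
  with rev_all f have X: "Rev S f \<in> hom S (Prod S A B) A \<and>
        (\<forall>g \<in> hom S A B. Rev S (Add S f g) = Add S (Rev S f) (Rev S g)) \<and>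
        Rev S (Zero S A B) = Zero S (Prod S A B) A \<and>
        (\<forall>X \<in> Obj S. \<forall>a \<in> hom S X A. \<forall>b \<in> hom S X B. \<forall>c \<in> hom S X B.
           Comp S (Pair S a (Add S b c)) (Rev S f) =
             Add S (Comp S (Pair S a b) (Rev S f)) (Comp S (Pair S a c) (Rev S f))) \<and>
        (\<forall>X \<in> Obj S. \<forall>a \<in> hom S X A.
           Comp S (Pair S a (Zero S X B)) (Rev S f) = Comp S (Rst S (Comp S a f)) (Zero S X A)) \<and>
        (\<forall>D \<in> Obj S. \<forall>g \<in> hom S B D.
           Rev S (Comp S f g) =
             Comp S (Pair S (Pi0 S A D)
                       (Comp S (Pair S (Comp S (Pi0 S A D) f) (Pi1 S A D)) (Rev S g)))
                    (Rev S f)) \<and>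
        Comp S (Pair S (prodmap S (Id S A) (Pi0 S B B)) (prodmap S (Zero S A A) (Pi1 S B B)))
               (Comp S (prodmap S (iota0 S (Prod S A B) A) (Id S (Prod S A B)))
                       (Comp S (Rev S (Rev S (Rev S f))) (Pi1 S (Prod S A B) A)))
          = Comp S (prodmap S (Id S A) (Pi1 S B B)) (Rev S f) \<and>
        (let g = Comp S (prodmap S (iota0 S A B) (Id S A))
                        (Comp S (Rev S (Rev S f)) (Pi1 S A B));
             h = Comp S (prodmap S (iota0 S (Prod S A A) B) (Id S (Prod S A A)))
                        (Comp S (Rev S (Rev S g)) (Pi1 S (Prod S A A) B));
             ex = Pair S (prodmap S (Pi0 S A A) (Pi0 S A A)) (prodmap S (Pi1 S A A) (Pi1 S A A))
         in h = Comp S ex h) \<and>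
        Rst S (Rev S f) = prodmap S (Rst S f) (Id S B) \<and>
        Rev S (Rst S f) = Comp S (prodmap S (Rst S f) (Id S A)) (Pi1 S A A)"
    by blast
  then show ?thesis by (elim conjE) (intro conjI)
qed

lemma rev_hom: "f \<in> hom S A B \<Longrightarrow> Rev S f \<in> hom S (Prod S A B) A"
  using rev_one by blast

lemma rev_comp: "f \<in> hom S A B \<Longrightarrow> g \<in> hom S B D \<Longrightarrow>
   Rev S (Comp S f g) =
     Comp S (Pair S (Pi0 S A D) (Comp S (Pair S (Comp S (Pi0 S A D) f) (Pi1 S A D)) (Rev S g)))
            (Rev S f)"
  using rev_one hom_obj by blast

lemma rev_rst_eq: "f \<in> hom S A B \<Longrightarrow> Rst S (Rev S f) = prodmap S (Rst S f) (Id S B)"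
  using rev_one by blast

lemma rev_of_rst: "f \<in> hom S A B \<Longrightarrow> Rev S (Rst S f) = Comp S (prodmap S (Rst S f) (Id S A)) (Pi1 S A A)"
  using rev_one by blast


lemma pair_pi0e:
  assumes e: "e \<in> hom S A A" and ee: "Rst S e = e" and B: "B \<in> Obj S"
  shows "Pair S (Comp S (Pi0 S A B) e) (Pi1 S A B) = Rst S (Comp S (Pi0 S A B) e)"
proof -
  have A: "A \<in> Obj S" using hom_obj[OF e] by blast
  note p0 = pi0_hom[OF A B] and p1 = pi1_hom[OF A B]
  have a: "Comp S (Pi0 S A B) e \<in> hom S (Prod S A B) A" using comp_hom[OF p0 e] .
  have h: "Rst S (Comp S (Pi0 S A B) e) \<in> hom S (Prod S A B) (Prod S A B)" using rst_hom[OF a] .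
  have "Comp S (Rst S (Comp S (Pi0 S A B) e)) (Pi0 S A B) = Comp S (Pi0 S A B) (Rst S e)"
    using rst_swap[OF p0 e] by simp
  also have "\<dots> = Comp S (Rst S (Pi1 S A B)) (Comp S (Pi0 S A B) e)"
    using ee pi1_rst[OF A B] id_left[OF a] by simp
  finally have 1: "Comp S (Rst S (Comp S (Pi0 S A B) e)) (Pi0 S A B) = Comp S (Rst S (Pi1 S A B)) (Comp S (Pi0 S A B) e)" .
  show ?thesis using pair_uniq[OF a p1 h 1] by simp
qed

lemma rev_restr_comp:
  assumes e: "e \<in> hom S A A" and ee: "Rst S e = e" and g: "g \<in> hom S A B"
  shows "Rev S (Comp S e g) = Comp S (Rst S (Comp S (Pi0 S A B) e)) (Rev S g)"
proof -
  have A: "A \<in> Obj S" and B: "B \<in> Obj S" using hom_obj[OF g] by auto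
  define p0 where "p0 = Pi0 S A B"
  define p1 where "p1 = Pi1 S A B"
  define q0 where "q0 = Pi0 S A A"
  define q1 where "q1 = Pi1 S A A"
  define P where "P = Prod S A B"
  define Q where "Q = Prod S A A"
  have p0: "p0 \<in> hom S P A" unfolding p0_def P_def using pi0_hom[OF A B] .
  have p1: "p1 \<in> hom S P B" unfolding p1_def P_def using pi1_hom[OF A B] .
  have q0: "q0 \<in> hom S Q A" unfolding q0_def Q_def using pi0_hom[OF A A] .
  have q1: "q1 \<in> hom S Q A" unfolding q1_def Q_def using pi1_hom[OF A A] .
  have Rg: "Rev S g \<in> hom S P A" unfolding P_def using rev_hom[OF g] .
  have p0e: "Comp S p0 e \<in> hom S P A" using comp_hom[OF p0 e] .
  have q0e: "Comp S q0 e \<in> hom S Q A" using comp_hom[OF q0 e] .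
  have pr: "Pair S (Comp S p0 e) p1 \<in> hom S P P"
    unfolding P_def using pair_hom[OF p0e[unfolded P_def] p1[unfolded P_def]] .
  define k where "k = Comp S (Pair S (Comp S p0 e) p1) (Rev S g)"
  have k: "k \<in> hom S P A" unfolding k_def using comp_hom[OF pr Rg] .
  have pk: "Pair S p0 k \<in> hom S P Q" unfolding Q_def using pair_hom[OF p0 k] .
  have s1: "Rev S (Comp S e g) = Comp S (Pair S p0 k) (Rev S e)"
    unfolding k_def p0_def p1_def using rev_comp[OF e g] by simp
  have "Rev S e = Rev S (Rst S e)" using ee by simp
  also have "\<dots> = Comp S (prodmap S (Rst S e) (Id S A)) q1" unfolding q1_def using rev_of_rst[OF e] .
  also have "prodmap S (Rst S e) (Id S A) = Pair S (Comp S q0 e) q1"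
    unfolding prodmap_def q0_def q1_def using ee hom_dom[OF rst_hom[OF e]] hom_dom[OF id_hom[OF A]]
      id_right[OF q1[unfolded q1_def Q_def]] by simp
  also have "Comp S (Pair S (Comp S q0 e) q1) q1 = Comp S (Rst S (Comp S q0 e)) q1"
    unfolding q1_def using pair_pi1[OF q0e[unfolded Q_def] q1[unfolded Q_def q1_def]] by simp
  finally have s2: "Rev S e = Comp S (Rst S (Comp S q0 e)) q1" .
  have rq: "Rst S (Comp S q0 e) \<in> hom S Q Q" using rst_hom[OF q0e] .
  have "Rev S (Comp S e g) = Comp S (Comp S (Pair S p0 k) (Rst S (Comp S q0 e))) q1"
    using s1 s2 assoc[OF pk rq q1] by simp
  also have "Comp S (Pair S p0 k) (Rst S (Comp S q0 e)) =
      Comp S (Rst S (Comp S (Pair S p0 k) (Comp S q0 e))) (Pair S p0 k)"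
    using rst_swap[OF pk q0e] .
  also have "Comp S (Pair S p0 k) (Comp S q0 e) = Comp S (Rst S k) (Comp S p0 e)"
  proof -
    have "Comp S (Pair S p0 k) (Comp S q0 e) = Comp S (Comp S (Pair S p0 k) q0) e"
      using assoc[OF pk q0 e] by simp
    also have "Comp S (Pair S p0 k) q0 = Comp S (Rst S k) p0"
      unfolding q0_def using pair_pi0[OF p0[unfolded P_def] k[unfolded P_def]] .
    also have "Comp S (Comp S (Rst S k) p0) e = Comp S (Rst S k) (Comp S p0 e)"
      using assoc[OF rst_hom[OF k] p0 e] .
    finally show ?thesis .
  qed
  also have "Rst S (Comp S (Rst S k) (Comp S p0 e)) = Comp S (Rst S k) (Rst S (Comp S p0 e))"
    using rst_rst_comp[OF k p0e] .
  also have "Comp S (Comp S (Comp S (Rst S k) (Rst S (Comp S p0 e))) (Pair S p0 k)) q1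
      = Comp S (Comp S (Rst S k) (Rst S (Comp S p0 e))) (Comp S (Pair S p0 k) q1)"
    using assoc[OF comp_hom[OF rst_hom[OF k] rst_hom[OF p0e]] pk q1] .
  also have "Comp S (Pair S p0 k) q1 = k"
    unfolding q1_def using pair_pi1[OF p0[unfolded P_def] k[unfolded P_def]]
      p0_def pi0_rst[OF A B] id_left[OF k] P_def by simp
  also have "Comp S (Comp S (Rst S k) (Rst S (Comp S p0 e))) k
      = Comp S (Comp S (Rst S (Comp S p0 e)) (Rst S k)) k"
    using rst_commute[OF k p0e] by simp
  also have "\<dots> = Comp S (Rst S (Comp S p0 e)) (Comp S (Rst S k) k)"
    using assoc[OF rst_hom[OF p0e] rst_hom[OF k] k] .
  also have "\<dots> = Comp S (Rst S (Comp S p0 e)) k" using rst_comp[OF k] by simp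
  also have "\<dots> = Comp S (Comp S (Rst S (Comp S p0 e)) (Pair S (Comp S p0 e) p1)) (Rev S g)"
    unfolding k_def using assoc[OF rst_hom[OF p0e] pr Rg] by simp
  also have "Pair S (Comp S p0 e) p1 = Rst S (Comp S p0 e)"
    unfolding p0_def p1_def using pair_pi0e[OF e ee B] .
  also have "Comp S (Rst S (Comp S p0 e)) (Rst S (Comp S p0 e)) = Rst S (Comp S p0 e)"
    using rst_dup[OF p0e] .
  finally show ?thesis unfolding p0_def .
qed

lemma rev_rst_pi0: assumes f: "f \<in> hom S A B"
  shows "Rst S (Rev S f) = Rst S (Comp S (Pi0 S A B) f)"
proof -
  have A: "A \<in> Obj S" and B: "B \<in> Obj S" using hom_obj[OF f] by auto
  have rf: "Rst S f \<in> hom S A A" using rst_hom[OF f] .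
  have "Rst S (Rev S f) = prodmap S (Rst S f) (Id S B)" using rev_rst_eq[OF f] .
  also have "\<dots> = Pair S (Comp S (Pi0 S A B) (Rst S f)) (Pi1 S A B)"
    unfolding prodmap_def using hom_dom[OF rf] hom_dom[OF id_hom[OF B]] id_right[OF pi1_hom[OF A B]] by simp
  also have "\<dots> = Rst S (Comp S (Pi0 S A B) (Rst S f))"
    using pair_pi0e[OF rf rst_idem[OF f] B] .
  also have "\<dots> = Rst S (Comp S (Pi0 S A B) f)" using rst_comp_rst[OF pi0_hom[OF A B] f] .
  finally show ?thesis .
qed

lemma part1: assumes f: "f \<in> hom S A B" and g: "g \<in> hom S A B" and le: "rleq S f g"
  shows "rleq S (Rev S f) (Rev S g)"
proof -
  have A: "A \<in> Obj S" and B: "B \<in> Obj S" using hom_obj[OF f] by auto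
  have fe: "f = Comp S (Rst S f) g" using le unfolding rleq_def by simp
  have "Rev S f = Rev S (Comp S (Rst S f) g)" using fe by simp
  also have "\<dots> = Comp S (Rst S (Comp S (Pi0 S A B) (Rst S f))) (Rev S g)"
    using rev_restr_comp[OF rst_hom[OF f] rst_idem[OF f] g] .
  also have "Rst S (Comp S (Pi0 S A B) (Rst S f)) = Rst S (Rev S f)"
    using rev_rst_pi0[OF f] rst_comp_rst[OF pi0_hom[OF A B] f] by simp
  finally show ?thesis unfolding rleq_def by simp
qed


lemma rleq_antisym: assumes a: "a \<in> hom S A B" and b: "b \<in> hom S A B"
  and ab: "rleq S a b" and ba: "rleq S b a" shows "a = b"
proof -
  have 1: "Comp S (Rst S a) b = a" "Comp S (Rst S b) a = b" using ab ba unfolding rleq_def by auto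
  have x: "Rst S a = Comp S (Rst S a) (Rst S b)" using rst_rst_comp[OF a b] 1(1) by metis
  have y: "Rst S b = Comp S (Rst S b) (Rst S a)" using rst_rst_comp[OF b a] 1(2) by metis
  have "Rst S a = Rst S b" using x y rst_commute[OF a b] by metis
  then show ?thesis using 1 rst_comp[OF b] by metis
qed

lemma join_uniq: "is_join S A B F j \<Longrightarrow> is_join S A B F k \<Longrightarrow> j = k"
  unfolding is_join_def by (meson rleq_antisym)

lemma below_compat: assumes u: "u \<in> hom S A B" and F: "F \<subseteq> hom S A B"
  and le: "\<forall>f \<in> F. rleq S f u" shows "compatible_family S F"
  unfolding compatible_family_def compatible_def
proof (intro ballI)
  fix f g assume f: "f \<in> F" and g: "g \<in> F"
  have fh: "f \<in> hom S A B" and gh: "g \<in> hom S A B" using f g F by auto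
  have ff: "Comp S (Rst S f) u = f" and gg: "Comp S (Rst S g) u = g"
    using le f g unfolding rleq_def by auto
  have "Comp S (Rst S f) g = Comp S (Comp S (Rst S f) (Rst S g)) u"
    using gg assoc[OF rst_hom[OF fh] rst_hom[OF gh] u] by simp
  also have "\<dots> = Comp S (Comp S (Rst S g) (Rst S f)) u" using rst_commute[OF fh gh] by simp
  also have "\<dots> = Comp S (Rst S g) f"
    using ff assoc[OF rst_hom[OF gh] rst_hom[OF fh] u] by simp
  finally show "Comp S (Rst S f) g = Comp S (Rst S g) f" .
qed

context
  assumes jr: "join_restriction_category S"
begin

lemma join_exists: "A \<in> Obj S \<Longrightarrow> B \<in> Obj S \<Longrightarrow> F \<subseteq> hom S A B \<Longrightarrow> compatible_family S F \<Longrightarrow>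
   \<exists>j. is_join S A B F j"
proof -
  have "\<forall>A \<in> Obj S. \<forall>B \<in> Obj S. \<forall>F. F \<subseteq> hom S A B \<and> compatible_family S F \<longrightarrow>
        (\<exists>j. is_join S A B F j)"
    using jr unfolding join_restriction_category_def by (elim conjE)
  then show "A \<in> Obj S \<Longrightarrow> B \<in> Obj S \<Longrightarrow> F \<subseteq> hom S A B \<Longrightarrow> compatible_family S F \<Longrightarrow>
   \<exists>j. is_join S A B F j" by blast
qed

lemma jr3: "\<forall>A B F j. F \<subseteq> hom S A B \<and> compatible_family S F \<and> is_join S A B F j \<longrightarrow>
        (\<forall>D h. h \<in> hom S D A \<longrightarrow> is_join S D B ((\<lambda>f. Comp S h f) ` F) (Comp S h j)) \<and>
        (\<forall>D k. k \<in> hom S B D \<longrightarrow> is_join S A D ((\<lambda>f. Comp S f k) ` F) (Comp S j k))"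
    using jr unfolding join_restriction_category_def by (elim conjE)

lemma join_pre: "F \<subseteq> hom S A B \<Longrightarrow> compatible_family S F \<Longrightarrow> is_join S A B F j \<Longrightarrow>
   h \<in> hom S D A \<Longrightarrow> is_join S D B ((\<lambda>f. Comp S h f) ` F) (Comp S h j)"
  using jr3 by blast

lemma join_post: "F \<subseteq> hom S A B \<Longrightarrow> compatible_family S F \<Longrightarrow> is_join S A B F j \<Longrightarrow>
   k \<in> hom S B D \<Longrightarrow> is_join S A D ((\<lambda>f. Comp S f k) ` F) (Comp S j k)"
  using jr3 by blast

lemma join_rst: assumes F: "F \<subseteq> hom S A B" and cF: "compatible_family S F"
  and J: "is_join S A B F j"
  shows "is_join S A A (Rst S ` F) (Rst S j)"
proof -
  have j: "j \<in> hom S A B" and jle: "\<forall>f\<in>F. rleq S f j" using J unfolding is_join_def by auto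
  have A: "A \<in> Obj S" and B: "B \<in> Obj S" using hom_obj[OF j] by auto
  have RF: "Rst S ` F \<subseteq> hom S A A" using F rst_hom by blast
  have leid: "\<forall>x \<in> Rst S ` F. rleq S x (Id S A)"
    using F rst_idem id_right rst_hom unfolding rleq_def by fastforce
  have cR: "compatible_family S (Rst S ` F)" using below_compat[OF id_hom[OF A] RF leid] .
  obtain k where K: "is_join S A A (Rst S ` F) k" using join_exists[OF A A RF cR] by blast
  have k: "k \<in> hom S A A" using K unfolding is_join_def by auto
  have kid: "rleq S k (Id S A)" using K id_hom[OF A] leid unfolding is_join_def by blast
  then have kr: "Rst S k = k" using id_right[OF rst_hom[OF k]] unfolding rleq_def by simp
  have "is_join S A B ((\<lambda>x. Comp S x j) ` Rst S ` F) (Comp S k j)"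
    using join_post[OF RF cR K j] .
  moreover have "(\<lambda>x. Comp S x j) ` Rst S ` F = F"
  proof -
    have "\<And>f. f \<in> F \<Longrightarrow> Comp S (Rst S f) j = f" using jle unfolding rleq_def by blast
    then show ?thesis by (simp add: image_image)
  qed
  ultimately have "is_join S A B F (Comp S k j)" by simp
  then have kj: "Comp S k j = j" using join_uniq J by blast
  have rj: "Rst S j = Comp S (Rst S k) (Rst S j)" using rst_rst_comp[OF k j] kj kr by metis
  show ?thesis unfolding is_join_def
  proof (intro conjI ballI impI)
    show "Rst S j \<in> hom S A A" using rst_hom[OF j] .
  next
    fix x assume "x \<in> Rst S ` F"
    then obtain f where f: "f \<in> F" and xf: "x = Rst S f" by blast
    have fh: "f \<in> hom S A B" using f F by auto
    have "Comp S (Rst S f) j = f" using jle f unfolding rleq_def by blast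
    then show "rleq S x (Rst S j)"
      unfolding rleq_def xf using rst_idem[OF fh] rst_rst_comp[OF fh j] by simp
  next
    fix h assume h: "h \<in> hom S A A" and hb: "\<forall>x\<in>Rst S ` F. rleq S x h"
    have kh: "Comp S (Rst S k) h = k" using K h hb unfolding is_join_def rleq_def by blast
    have rjk: "Rst S j = Comp S (Rst S j) (Rst S k)" using rj rst_commute[OF j k] by metis
    have "Comp S (Rst S j) h = Comp S (Comp S (Rst S j) (Rst S k)) h" using rjk by metis
    also have "\<dots> = Comp S (Rst S j) (Comp S (Rst S k) h)"
      using assoc[OF rst_hom[OF j] rst_hom[OF k] h] .
    also have "\<dots> = Rst S j" using kh kr rjk by metis
    finally show "rleq S (Rst S j) h" unfolding rleq_def using rst_idem[OF j] by simp
  qed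
qed

lemma part2: assumes F: "F \<subseteq> hom S A B" and cF: "compatible_family S F"
  and J: "is_join S A B F j"
  shows "is_join S (Prod S A B) A (Rev S ` F) (Rev S j)"
proof -
  have j: "j \<in> hom S A B" and jle: "\<forall>f\<in>F. rleq S f j" using J unfolding is_join_def by auto
  have A: "A \<in> Obj S" and B: "B \<in> Obj S" using hom_obj[OF j] by auto
  define P where "P = Prod S A B"
  define p0 where "p0 = Pi0 S A B"
  have P: "P \<in> Obj S" unfolding P_def using prod_obj[OF A B] .
  have p0: "p0 \<in> hom S P A" unfolding p0_def P_def using pi0_hom[OF A B] .
  have Rj: "Rev S j \<in> hom S P A" unfolding P_def using rev_hom[OF j] .
  have RF: "Rev S ` F \<subseteq> hom S P A" unfolding P_def using F rev_hom by blast
  have Rle: "\<forall>x \<in> Rev S ` F. rleq S x (Rev S j)"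
  proof
    fix x assume "x \<in> Rev S ` F"
    then obtain f where f: "f \<in> F" and xf: "x = Rev S f" by blast
    have "f \<in> hom S A B" using f F by auto
    then show "rleq S x (Rev S j)" using part1[OF _ j] jle f xf by blast
  qed
  have cR: "compatible_family S (Rev S ` F)" using below_compat[OF Rj RF Rle] .
  obtain K where K: "is_join S P A (Rev S ` F) K" using join_exists[OF P A RF cR] by blast
  have Kh: "K \<in> hom S P A" using K unfolding is_join_def by auto
  have KRj: "rleq S K (Rev S j)" using K Rj Rle unfolding is_join_def by blast
  have rK: "is_join S P P (Rst S ` Rev S ` F) (Rst S K)" using join_rst[OF RF cR K] .
  have PJ: "is_join S P B ((\<lambda>f. Comp S p0 f) ` F) (Comp S p0 j)" using join_pre[OF F cF J p0] .
  have PF: "(\<lambda>f. Comp S p0 f) ` F \<subseteq> hom S P B" using F comp_hom[OF p0] by blast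
  have cP: "compatible_family S ((\<lambda>f. Comp S p0 f) ` F)"
    using below_compat[OF comp_hom[OF p0 j] PF] PJ unfolding is_join_def by blast
  have rP: "is_join S P P (Rst S ` (\<lambda>f. Comp S p0 f) ` F) (Rst S (Comp S p0 j))"
    using join_rst[OF PF cP PJ] .
  have "Rst S ` Rev S ` F = Rst S ` (\<lambda>f. Comp S p0 f) ` F"
  proof -
    have "\<And>f. f \<in> F \<Longrightarrow> Rst S (Rev S f) = Rst S (Comp S p0 f)"
      unfolding p0_def using rev_rst_pi0 F by (meson subsetD)
    then show ?thesis by (simp add: image_image)
  qed
  then have "Rst S K = Rst S (Comp S p0 j)" using join_uniq rK rP by metis
  also have "\<dots> = Rst S (Rev S j)" unfolding p0_def using rev_rst_pi0[OF j] by simp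
  finally have "Rst S K = Rst S (Rev S j)" .
  then have KeqRj: "K = Rev S j" using KRj rst_comp[OF Rj] unfolding rleq_def by metis
  show ?thesis using K KeqRj unfolding P_def by simp
qed

end

end

theorem mainTheorem2:
  fixes S :: "('o, 'a, 'x) rdrc_data_scheme"
  assumes "rdrc S"
  shows "(\<forall>A B f g. f \<in> hom S A B \<and> g \<in> hom S A B \<and> rleq S f g \<longrightarrow>
             rleq S (Rev S f) (Rev S g)) \<and>
         (join_restriction_category S \<longrightarrow>
           (\<forall>A B F j. F \<subseteq> hom S A B \<and> compatible_family S F \<and> is_join S A B F j \<longrightarrow>
              is_join S (Prod S A B) A (Rev S ` F) (Rev S j)))"
  using part1[OF assms] part2[OF assms] by blast

end
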